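(* Let $n$ be even, let $x_1,\dots,x_n\in\mathbb{R}^d$, let $\pi_k$ be a permutation of $[n]$ (vector $x_i$ is associated with datapoint $\pi_k(i)$), and let $S\subseteq[n]$ with $|S|=n/2$. Form $\pi_{k+1}$ by thinned reordering: starting from empty lists $\mathrm{front}$ and $\mathrm{back}$, for $i=1,\dots,n$ append $\pi_k(i)$ to $\mathrm{front}$ if $i\in S$ and otherwise prepend $\pi_k(i)$ to $\mathrm{back}$; set $\pi_{k+1}=\mathrm{concatenate}(\mathrm{front},\mathrm{back})$. Let $y_1,\dots,y_n$ be the vectors listed in the new order, i.e. $y_j=x_i$ where $\pi_k(i)=\pi_{k+1}(j)$. With $\eta_i:=2\cdot\mathbf{1}\{i\in S\}-1$, $$\max_{j\in[n]}\Big\|\sum_{l=1}^jy_l\Big\|_2\le\frac12\max_{j\in[n]}\Big\|\sum_{i=1}^jx_i\Big\|_2+\frac12\max_{j\in[n]}\Big\|\sum_{i=1}^j\eta_ix_i\Big\|_2+\Big\|\sum_{i=1}^nx_i\Big\|_2.$$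
   Context: In the paper, $x_i=x_i^k$ are the stochastic gradients of epoch $k$ and $S$ is the set of indices kept by a thinning algorithm returning $n/2$ of the $n$ vectors. *)

theory Defs
  imports "HOL-Analysis.Analysis"
begin

definition thin_step :: "nat set \<Rightarrow> (nat \<Rightarrow> nat) \<Rightarrow> nat list \<times> nat list \<Rightarrow> nat \<Rightarrow> nat list \<times> nat list" where
  "thin_step S \<pi> fb i = (case fb of (front, back) \<Rightarrow>
     if i \<in> S then (front @ [\<pi> i], back) else (front, \<pi> i # back))"

text \<open>The new order pi_{k+1} as a list: run the loop for i = 1..n starting from
  empty lists, then concatenate front and back.  Position j (1-based) of the
  new permutation is entry j-1 of this list.\<close>
definition thinned_reorder :: "nat \<Rightarrow> nat set \<Rightarrow> (nat \<Rightarrow> nat) \<Rightarrow> nat list" where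
  "thinned_reorder n S \<pi> =
     (case foldl (thin_step S \<pi>) ([], []) [1..<n+1] of (front, back) \<Rightarrow> front @ back)"

end

theory Submission
  imports Defs
begin

lemma foldl_thin:
  "foldl (thin_step S \<pi>) ([], []) xs =
     (map \<pi> (filter (\<lambda>i. i \<in> S) xs), rev (map \<pi> (filter (\<lambda>i. i \<notin> S) xs)))"
  by (induction xs rule: rev_induct) (auto simp: thin_step_def)

lemma thinned_reorder_eq:
  "thinned_reorder n S \<pi> = map \<pi> (filter (\<lambda>i. i \<in> S) [1..<n+1] @ rev (filter (\<lambda>i. i \<notin> S) [1..<n+1]))"
  by (simp add: thinned_reorder_def foldl_thin rev_map)

lemma take_filter_ex:
  "\<exists>k \<le> length xs. take j (filter P xs) = filter P (take k xs)"
proof (induction xs arbitrary: j)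
  case Nil
  then show ?case by simp
next
  case (Cons a xs)
  show ?case
  proof (cases "P a")
    case True
    show ?thesis
    proof (cases j)
      case 0
      then show ?thesis by (intro exI[of _ 0]) simp
    next
      case (Suc j')
      from Cons.IH[of j'] obtain k where "k \<le> length xs" "take j' (filter P xs) = filter P (take k xs)" by blast
      then show ?thesis using True Suc by (intro exI[of _ "Suc k"]) simp
    qed
  next
    case False
    from Cons.IH[of j] obtain k where "k \<le> length xs" "take j (filter P xs) = filter P (take k xs)" by blast
    then show ?thesis using False by (intro exI[of _ "Suc k"]) simp
  qed
qed

lemma take_filter_upt:
  "\<exists>k \<le> n. take j (filter P [1..<n+1]) = filter P [1..<k+1]"
proof -
  obtain k where "k \<le> length [1..<n+1]" "take j (filter P [1..<n+1]) = filter P (take k [1..<n+1])"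
    using take_filter_ex by blast
  moreover have "take k [1..<n+1] = [1..<1+k]" if "k \<le> n" for k
    using that by (intro take_upt) simp
  ultimately show ?thesis by (intro exI[of _ k]) (simp del: upt_Suc)
qed

lemma sum_list_filter:
  "sum_list (map f (filter P xs)) = sum_list (map (\<lambda>i. if P i then f i else 0) xs)"
  by (induction xs) auto

lemma sum_list_upt1:
  "sum_list (map f [1..<k+1]) = (\<Sum>i=1..k. f i)"
  by (metis atLeastLessThanSuc_atLeastAtMost Suc_eq_plus1 set_upt sum_set_upt_conv_sum_list_nat)

lemma sum_prefix_list:
  "j \<le> length M \<Longrightarrow> (\<Sum>l=1..j. f (M ! (l - 1))) = sum_list (map f (take j M))"
proof (induction j)
  case 0
  then show ?case by simp
next
  case (Suc j)
  then show ?case by (simp add: take_Suc_conv_app_nth)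
qed

theorem lemmaG1:
  fixes n :: nat and x :: "nat \<Rightarrow> real ^ 'd" and pik :: "nat \<Rightarrow> nat" and S :: "nat set"
  assumes "even n" and "0 < n"
    and "bij_betw pik {1..n} {1..n}"
    and "S \<subseteq> {1..n}" and "card S = n div 2"
  defines "y \<equiv> (\<lambda>j. x (inv_into {1..n} pik (thinned_reorder n S pik ! (j - 1))))"
    and "eta \<equiv> (\<lambda>i. 2 * (if i \<in> S then 1 else 0) - (1::real))"
  shows "Max ((\<lambda>j. norm (\<Sum>l=1..j. y l)) ` {1..n})
         \<le> 1/2 * Max ((\<lambda>j. norm (\<Sum>i=1..j. x i)) ` {1..n})
           + 1/2 * Max ((\<lambda>j. norm (\<Sum>i=1..j. eta i *\<^sub>R x i)) ` {1..n})
           + norm (\<Sum>i=1..n. x i)"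
proof -
  define F where "F = filter (\<lambda>i. i \<in> S) [1..<n+1]"
  define G where "G = filter (\<lambda>i. i \<notin> S) [1..<n+1]"
  define M where "M = F @ rev G"
  define P where "P = (\<lambda>k. \<Sum>i=1..k. x i)"
  define Q where "Q = (\<lambda>k. \<Sum>i=1..k. eta i *\<^sub>R x i)"
  define A where "A = Max ((\<lambda>j. norm (\<Sum>i=1..j. x i)) ` {1..n})"
  define B where "B = Max ((\<lambda>j. norm (\<Sum>i=1..j. eta i *\<^sub>R x i)) ` {1..n})"
  have L: "thinned_reorder n S pik = map pik M"
    unfolding M_def F_def G_def by (simp only: thinned_reorder_eq)
  have lenFG: "length F + length G = n"
    unfolding F_def G_def using sum_length_filter_compl[of "\<lambda>i. i \<in> S" "[1..<n+1]"] by simp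
  have lenM: "length M = n" using lenFG by (simp add: M_def)
  have setM: "set M \<subseteq> {1..n}" by (auto simp: M_def F_def G_def)
  have yj: "y j = x (M ! (j - 1))" if "j \<in> {1..n}" for j
  proof -
    have "j - 1 < length M" using that lenM by auto
    then have "M ! (j - 1) \<in> {1..n}" using setM nth_mem by blast
    moreover have "thinned_reorder n S pik ! (j - 1) = pik (M ! (j - 1))"
      using \<open>j - 1 < length M\<close> by (simp add: L)
    ultimately show ?thesis unfolding y_def
      using bij_betw_inv_into_left[OF assms(3)] by simp
  qed
  have "set F = S" using assms(4) by (auto simp: F_def)
  moreover have "distinct F" by (simp add: F_def)
  ultimately have lenF: "length F = n div 2" using assms(5) distinct_card by fastforce
  have A_ge: "norm (P k) \<le> A" if "k \<le> n" for k
  proof (cases "k = 0")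
    case True
    have A': "A = Max ((\<lambda>j. norm (P j)) ` {1..n})" by (simp add: A_def P_def)
    have "norm (P 1) \<in> (\<lambda>j. norm (P j)) ` {1..n}" using assms(2) by auto
    then have "norm (P 1) \<le> A" unfolding A' by (intro Max_ge) auto
    then have "0 \<le> A" using norm_ge_zero[of "P 1"] by linarith
    then show ?thesis using True by (simp add: P_def)
  next
    case False
    then show ?thesis unfolding A_def P_def using that by (intro Max_ge) auto
  qed
  have B_ge: "norm (Q k) \<le> B" if "k \<le> n" for k
  proof (cases "k = 0")
    case True
    have B': "B = Max ((\<lambda>j. norm (Q j)) ` {1..n})" by (simp add: B_def Q_def)
    have "norm (Q 1) \<in> (\<lambda>j. norm (Q j)) ` {1..n}" using assms(2) by auto
    then have "norm (Q 1) \<le> B" unfolding B' by (intro Max_ge) auto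
    then have "0 \<le> B" using norm_ge_zero[of "Q 1"] by linarith
    then show ?thesis using True by (simp add: Q_def)
  next
    case False
    then show ?thesis unfolding B_def Q_def using that by (intro Max_ge) auto
  qed
  have sumS: "sum_list (map x (filter (\<lambda>i. i \<in> S) [1..<k+1])) = (1/2) *\<^sub>R (P k + Q k)" for k
  proof -
    have "sum_list (map x (filter (\<lambda>i. i \<in> S) [1..<k+1])) = (\<Sum>i=1..k. if i \<in> S then x i else 0)"
      by (simp only: sum_list_filter sum_list_upt1)
    also have "\<dots> = (\<Sum>i=1..k. (1/2) *\<^sub>R (x i + eta i *\<^sub>R x i))"
      by (intro sum.cong) (auto simp: eta_def scaleR_add_right)
    also have "\<dots> = (1/2) *\<^sub>R (P k + Q k)"
      by (simp only: P_def Q_def sum.distrib[symmetric] scaleR_sum_right)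
    finally show ?thesis .
  qed
  have sumG: "sum_list (map x (filter (\<lambda>i. i \<notin> S) [1..<k+1])) = (1/2) *\<^sub>R (P k - Q k)" for k
  proof -
    have "sum_list (map x (filter (\<lambda>i. i \<notin> S) [1..<k+1])) = (\<Sum>i=1..k. if i \<notin> S then x i else 0)"
      by (simp only: sum_list_filter sum_list_upt1)
    also have "\<dots> = (\<Sum>i=1..k. (1/2) *\<^sub>R (x i - eta i *\<^sub>R x i))"
      by (intro sum.cong) (auto simp: eta_def scaleR_diff_right)
    also have "\<dots> = (1/2) *\<^sub>R (P k - Q k)"
      by (simp only: P_def Q_def sum_subtractf[symmetric] scaleR_sum_right)
    finally show ?thesis .
  qed
  have half: "norm ((1/2) *\<^sub>R (P k + Q k)) \<le> A/2 + B/2" "norm ((1/2) *\<^sub>R (P k - Q k)) \<le> A/2 + B/2"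
    if "k \<le> n" for k
  proof -
    have "norm (P k + Q k) \<le> A + B" using norm_triangle_ineq[of "P k" "Q k"] A_ge[OF that] B_ge[OF that] by linarith
    then show "norm ((1/2) *\<^sub>R (P k + Q k)) \<le> A/2 + B/2" by simp
    have "norm (P k - Q k) \<le> A + B" using norm_triangle_ineq4[of "P k" "Q k"] A_ge[OF that] B_ge[OF that] by linarith
    then show "norm ((1/2) *\<^sub>R (P k - Q k)) \<le> A/2 + B/2" by simp
  qed
  have total: "sum_list (map x F) + sum_list (map x G) = P n"
  proof -
    have "sum_list (map x F) + sum_list (map x G) = (\<Sum>i=1..n. (if i \<in> S then x i else 0) + (if i \<notin> S then x i else 0))"
      unfolding F_def G_def by (simp only: sum_list_filter sum_list_upt1 sum.distrib)
    also have "\<dots> = P n" unfolding P_def by (intro sum.cong) auto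
    finally show ?thesis .
  qed
  have main: "norm (\<Sum>l=1..j. y l) \<le> A/2 + B/2 + norm (P n)" if j: "j \<in> {1..n}" for j
  proof -
    have "(\<Sum>l=1..j. y l) = (\<Sum>l=1..j. x (M ! (l - 1)))"
      using j by (intro sum.cong refl yj) auto
    also have "\<dots> = sum_list (map x (take j M))"
      using j lenM by (intro sum_prefix_list) auto
    finally have eq: "(\<Sum>l=1..j. y l) = sum_list (map x (take j M))" .
    show ?thesis
    proof (cases "j \<le> length F")
      case True
      then have "take j M = take j F" by (simp add: M_def)
      moreover obtain k where "k \<le> n" "take j F = filter (\<lambda>i. i \<in> S) [1..<k+1]"
        unfolding F_def using take_filter_upt by blast
      ultimately have "(\<Sum>l=1..j. y l) = (1/2) *\<^sub>R (P k + Q k)" using eq sumS by simp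
      then have "norm (\<Sum>l=1..j. y l) \<le> A/2 + B/2" using half(1)[OF \<open>k \<le> n\<close>] by simp
      then show ?thesis using norm_ge_zero[of "P n"] by linarith
    next
      case False
      define t where "t = length G - (j - length F)"
      have "take j M = F @ rev (drop t G)"
        using False by (simp add: M_def take_rev t_def)
      then have "sum_list (map x (take j M)) = sum_list (map x F) + sum_list (map x (drop t G))"
        by (simp add: sum_list_rev rev_map[symmetric])
      moreover have "sum_list (map x G) = sum_list (map x (take t G)) + sum_list (map x (drop t G))"
        by (metis append_take_drop_id map_append sum_list_append)
      moreover obtain k where "k \<le> n" "take t G = filter (\<lambda>i. i \<notin> S) [1..<k+1]"
        unfolding G_def using take_filter_upt by blast
      ultimately have e1: "(\<Sum>l=1..j. y l) = sum_list (map x F) + sum_list (map x (drop t G))"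
        and e2: "sum_list (map x G) = sum_list (map x (take t G)) + sum_list (map x (drop t G))"
        and e3: "sum_list (map x (take t G)) = (1/2) *\<^sub>R (P k - Q k)"
        using eq sumG[of k] by (simp_all del: upt_Suc)
      have "(\<Sum>l=1..j. y l) = (sum_list (map x F) + (sum_list (map x (take t G)) + sum_list (map x (drop t G)))) - sum_list (map x (take t G))"
        using e1 by simp
      also have "\<dots> = P n - (1/2) *\<^sub>R (P k - Q k)"
        using e2 e3 total by simp
      finally have "(\<Sum>l=1..j. y l) = P n - (1/2) *\<^sub>R (P k - Q k)" .
      then have "norm (\<Sum>l=1..j. y l) \<le> norm (P n) + norm ((1/2) *\<^sub>R (P k - Q k))"
        by (simp only: norm_triangle_ineq4)
      then show ?thesis using half(2)[OF \<open>k \<le> n\<close>] by linarith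
    qed
  qed
  have "Max ((\<lambda>j. norm (\<Sum>l=1..j. y l)) ` {1..n}) \<le> A/2 + B/2 + norm (P n)"
    using main assms(2) by (subst Max_le_iff) auto
  then show ?thesis by (simp add: A_def B_def P_def)
qed

end
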